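(* Let $p$ be an odd prime, $r,m$ positive integers and $s\in\{0,1,\dots,mp^{r-1}-1\}$. Then $$\binom{mp^r}{sp}\binom{2sp}{sp}\binom{2mp^r-2sp}{mp^r-sp}\equiv\binom{mp^{r-1}}{s}\binom{2s}{s}\binom{2mp^{r-1}-2s}{mp^{r-1}-s}\pmod{p^{2r}}.$$ *)

theory Defs
  imports "HOL-Number_Theory.Number_Theory"
begin

end

theory Submission
  imports Defs
begin


definition wp :: "nat \<Rightarrow> nat \<Rightarrow> nat" where
  "wp p M = (\<Prod>k\<in>{k\<in>{1..M}. \<not> p dvd k}. k)"

lemma pair_prod:
  fixes p q x :: nat
  assumes "odd q" "p dvd q" "p > 1"
  shows "(\<Prod>k\<in>{k\<in>{1..q}. \<not> p dvd k}. x + k)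
       = (\<Prod>k\<in>{k\<in>{1..q}. \<not> p dvd k \<and> 2 * k < q}. (x + k) * (x + (q - k)))"
proof -
  define K where "K = {k\<in>{1..q}. \<not> p dvd k}"
  define L where "L = {k\<in>{1..q}. \<not> p dvd k \<and> 2 * k < q}"
  have KL: "K = L \<union> (\<lambda>k. q - k) ` L"
  proof (intro equalityI subsetI)
    fix k assume k: "k \<in> K"
    hence k1: "1 \<le> k" "k \<le> q" "\<not> p dvd k" by (auto simp: K_def)
    have "k \<noteq> q" using k1(3) assms(2) by auto
    hence kq: "k < q" using k1 by simp
    show "k \<in> L \<union> (\<lambda>k. q - k) ` L"
    proof (cases "2 * k < q")
      case True then show ?thesis using k1 by (auto simp: L_def)
    next
      case False
      hence "2 * k > q" using assms(1) by presburger
      moreover have "\<not> p dvd (q - k)" using k1(3) assms(2) kq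
        by (metis dvd_diff_nat diff_diff_cancel less_imp_le)
      ultimately have "q - k \<in> L" using kq by (auto simp: L_def)
      moreover have "k = q - (q - k)" using kq by simp
      ultimately show ?thesis by blast
    qed
  next
    fix k assume "k \<in> L \<union> (\<lambda>k. q - k) ` L"
    then show "k \<in> K"
    proof
      assume "k \<in> L" then show ?thesis by (auto simp: K_def L_def)
    next
      assume "k \<in> (\<lambda>k. q - k) ` L"
      then obtain j where j: "j \<in> L" "k = q - j" by auto
      hence "1 \<le> j" "2 * j < q" "\<not> p dvd j" by (auto simp: L_def)
      moreover have "\<not> p dvd (q - j)" using `\<not> p dvd j` assms(2) `2 * j < q`
        by (metis dvd_diff_nat diff_diff_cancel less_imp_le le_trans le_add2 mult_2)
      ultimately show ?thesis using j by (auto simp: K_def)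
    qed
  qed
  have disj: "L \<inter> (\<lambda>k. q - k) ` L = {}" by (auto simp: L_def)
  have inj: "inj_on (\<lambda>k. q - k) L" by (auto simp: L_def inj_on_def)
  have fin: "finite L" by (simp add: L_def)
  have "(\<Prod>k\<in>K. x + k) = (\<Prod>k\<in>L. x + k) * (\<Prod>k\<in>(\<lambda>k. q - k) ` L. x + k)"
    unfolding KL by (rule prod.union_disjoint) (use fin disj in auto)
  also have "(\<Prod>k\<in>(\<lambda>k. q - k) ` L. x + k) = (\<Prod>k\<in>L. x + (q - k))"
    by (subst prod.reindex[OF inj]) simp
  finally show ?thesis unfolding K_def L_def by (simp add: prod.distrib)
qed

lemma pair_cong:
  fixes p q x :: nat
  assumes "odd q" "p dvd q" "p > 1" "q dvd x"
  shows "[(\<Prod>k\<in>{k\<in>{1..q}. \<not> p dvd k}. x + k) = (\<Prod>k\<in>{k\<in>{1..q}. \<not> p dvd k}. k)] (mod q^2)"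
proof -
  have "[(\<Prod>k\<in>{k\<in>{1..q}. \<not> p dvd k \<and> 2 * k < q}. (x + k) * (x + (q - k)))
        = (\<Prod>k\<in>{k\<in>{1..q}. \<not> p dvd k \<and> 2 * k < q}. (0 + k) * (0 + (q - k)))] (mod q^2)"
  proof (rule cong_prod)
    fix k assume "k \<in> {k\<in>{1..q}. \<not> p dvd k \<and> 2 * k < q}"
    hence kq: "k < q" by auto
    obtain y where y: "x = q * y" using assms(4) by auto
    obtain d where d: "q = k + d" using kq less_imp_add_positive by blast
    have "(x + k) * (x + (q - k)) = k * (q - k) + x * (x + q)"
      unfolding d by (simp add: algebra_simps)
    also have "x * (x + q) = q^2 * (y * (y + 1))" unfolding y by (simp add: algebra_simps power2_eq_square)
    finally have "(x + k) * (x + (q - k)) = k * (q - k) + q^2 * (y * (y + 1))" .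
    then show "[(x + k) * (x + (q - k)) = (0 + k) * (0 + (q - k))] (mod q^2)"
      by (simp add: cong_def)
  qed
  then show ?thesis
    using pair_prod[OF assms(1-3), of x] pair_prod[OF assms(1-3), of 0] by simp
qed



lemma suc_div_split:
  fixes n d :: nat assumes "d > 0"
  shows "Suc n div d = n div d + (if d dvd Suc n then 1 else 0)"
  using assms by (simp add: div_Suc mod_eq_0_iff_dvd)

lemma mult_card:
  fixes p n K :: nat assumes "prime p" "n > 0" "n \<le> K"
  shows "multiplicity p n = card {j\<in>{1..K}. p ^ j dvd n}"
proof -
  have nu: "\<not> is_unit p" using assms(1) by auto
  have "p ^ multiplicity p n dvd n" by (rule multiplicity_dvd)
  hence "p ^ multiplicity p n \<le> n" using assms(2) by (simp add: dvd_imp_le)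
  moreover have "multiplicity p n < p ^ multiplicity p n"
    by (rule power_gt_expt) (use prime_gt_1_nat[OF assms(1)] in simp)
  ultimately have mK: "multiplicity p n \<le> K" using assms(3) by linarith
  have n0: "n \<noteq> 0" using assms(2) by simp
  have iff: "\<And>j. p ^ j dvd n \<longleftrightarrow> j \<le> multiplicity p n"
    by (rule power_dvd_iff_le_multiplicity[OF n0 nu])
  have "{j\<in>{1..K}. p ^ j dvd n} = {1..multiplicity p n}"
    unfolding iff using mK by auto
  thus ?thesis by simp
qed

lemma legendre:
  fixes p n K :: nat assumes "prime p" "n \<le> K"
  shows "multiplicity p (fact n :: nat) = (\<Sum>j\<in>{1..K}. n div p ^ j)"
  using assms(2)
proof (induction n)
  case 0
  then show ?case by simp
next
  case (Suc n)
  have pe: "prime_elem p" using assms(1) by simp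
  have "multiplicity p (fact (Suc n) :: nat) = multiplicity p (Suc n * fact n)"
    by (simp add: fact_Suc)
  also have "\<dots> = multiplicity p (Suc n) + multiplicity p (fact n :: nat)"
    by (rule prime_elem_multiplicity_mult_distrib[OF pe]) auto
  also have "multiplicity p (fact n :: nat) = (\<Sum>j\<in>{1..K}. n div p ^ j)"
    using Suc by simp
  also have "multiplicity p (Suc n) = card {j\<in>{1..K}. p ^ j dvd Suc n}"
    using mult_card[OF assms(1), of "Suc n" K] Suc.prems by simp
  also have "\<dots> = (\<Sum>j\<in>{1..K}. (if p ^ j dvd Suc n then 1 else 0))"
    by (simp add: sum.If_cases Int_def)
  also have "\<dots> + (\<Sum>j\<in>{1..K}. n div p ^ j) = (\<Sum>j\<in>{1..K}. Suc n div p ^ j)"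
    unfolding sum.distrib[symmetric]
  proof (rule sum.cong)
    fix j assume "j \<in> {1..K}"
    have "p ^ j > 0" using assms(1) prime_gt_0_nat by simp
    then show "(if p ^ j dvd Suc n then 1 else 0) + n div p ^ j = Suc n div p ^ j"
      using suc_div_split[of "p^j" n] by simp
  qed simp
  finally show ?case .
qed

lemma mult_central:
  fixes p a K :: nat assumes "prime p" "2 * a \<le> K"
  shows "multiplicity p (2 * a choose a) = (\<Sum>j\<in>{1..K}. 2 * (a mod p ^ j) div p ^ j)"
proof -
  have pe: "prime_elem p" using assms(1) by simp
  have "fact a * fact a * (2 * a choose a) = (fact (2 * a) :: nat)"
    using binomial_fact_lemma[of a "2*a"] by simp
  hence "multiplicity p (fact (2 * a) :: nat) = multiplicity p (fact a * fact a * (2 * a choose a) :: nat)"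
    by simp
  also have "\<dots> = multiplicity p (fact a :: nat) + multiplicity p (fact a :: nat) + multiplicity p (2 * a choose a)"
    using prime_elem_multiplicity_mult_distrib[OF pe] by (simp add: fact_nonzero)
  finally have eq: "multiplicity p (fact (2 * a) :: nat) = 2 * multiplicity p (fact a :: nat) + multiplicity p (2 * a choose a)"
    by simp
  have l1: "multiplicity p (fact (2 * a) :: nat) = (\<Sum>j\<in>{1..K}. 2 * a div p ^ j)"
    using legendre[OF assms(1) assms(2)] .
  have l2: "multiplicity p (fact a :: nat) = (\<Sum>j\<in>{1..K}. a div p ^ j)"
    using legendre[OF assms(1), of a K] assms(2) by simp
  have "(\<Sum>j\<in>{1..K}. 2 * a div p ^ j) = (\<Sum>j\<in>{1..K}. 2 * (a div p ^ j) + 2 * (a mod p ^ j) div p ^ j)"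
  proof (rule sum.cong)
    fix j assume "j \<in> {1..K}"
    have pos: "p ^ j > 0" using assms(1) prime_gt_0_nat by simp
    have "2 * a = (2 * (a mod p ^ j)) + (2 * (a div p ^ j)) * p ^ j"
      by (metis add_mult_distrib2 mod_div_mult_eq mult.assoc)
    hence "2 * a div p ^ j = (2 * (a mod p ^ j)) div p ^ j + 2 * (a div p ^ j)"
      using pos by simp
    thus "2 * a div p ^ j = 2 * (a div p ^ j) + 2 * (a mod p ^ j) div p ^ j" by simp
  qed simp
  also have "\<dots> = 2 * (\<Sum>j\<in>{1..K}. a div p ^ j) + (\<Sum>j\<in>{1..K}. 2 * (a mod p ^ j) div p ^ j)"
    by (simp add: sum.distrib sum_distrib_left)
  finally show ?thesis using eq l1 l2 by simp
qed



lemma fact_split: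
  fixes p M :: nat assumes "prime p"
  shows "fact M = p ^ (M div p) * fact (M div p) * wp p M"
proof -
  have p0: "p > 0" using assms prime_gt_0_nat by simp
  have S: "{1..M} = {k\<in>{1..M}. \<not> p dvd k} \<union> (\<lambda>j. p * j) ` {1..M div p}"
  proof (intro equalityI subsetI)
    fix k assume k: "k \<in> {1..M}"
    show "k \<in> {k\<in>{1..M}. \<not> p dvd k} \<union> (\<lambda>j. p * j) ` {1..M div p}"
    proof (cases "p dvd k")
      case True
      then obtain j where j: "k = p * j" by auto
      have "j \<ge> 1" using k j by (cases j) auto
      moreover have "j \<le> M div p" using k j p0
        by (metis atLeastAtMost_iff div_le_mono nonzero_mult_div_cancel_left not_gr0)
      ultimately show ?thesis using j by auto
    qed (use k in auto)
  next
    fix k assume "k \<in> {k\<in>{1..M}. \<not> p dvd k} \<union> (\<lambda>j. p * j) ` {1..M div p}"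
    then show "k \<in> {1..M}"
    proof
      assume "k \<in> (\<lambda>j. p * j) ` {1..M div p}"
      then obtain j where j0: "j \<in> {1..M div p}" "k = p * j" by (rule imageE)
      hence j: "k = p * j" "1 \<le> j" "j \<le> M div p" by auto
      have "p * j \<le> p * (M div p)" using j by simp
      also have "\<dots> \<le> M" by simp
      finally show ?thesis using j p0 by simp
    qed auto
  qed
  have disj: "{k\<in>{1..M}. \<not> p dvd k} \<inter> (\<lambda>j. p * j) ` {1..M div p} = {}" by auto
  have inj: "inj_on (\<lambda>j. p * j) {1..M div p}" using p0 by (auto simp: inj_on_def)
  have "fact M = (\<Prod>k\<in>{1..M}. k)" by (simp add: fact_prod)
  also have "\<dots> = wp p M * (\<Prod>k\<in>(\<lambda>j. p * j) ` {1..M div p}. k)"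
    unfolding wp_def by (subst S, rule prod.union_disjoint) (use disj in auto)
  also have "(\<Prod>k\<in>(\<lambda>j. p * j) ` {1..M div p}. k) = (\<Prod>j\<in>{1..M div p}. p * j)"
    by (subst prod.reindex[OF inj]) simp
  also have "\<dots> = p ^ (M div p) * fact (M div p)"
    by (simp add: prod.distrib fact_prod)
  finally show ?thesis by simp
qed

lemma wp_coprime:
  fixes p M :: nat assumes "prime p"
  shows "coprime (wp p M) p"
  unfolding wp_def
proof (rule prod_coprime_left)
  fix k assume "k \<in> {k\<in>{1..M}. \<not> p dvd k}"
  hence "\<not> p dvd k" by simp
  thus "coprime k p" using assms by (metis coprime_commute prime_imp_coprime)
qed

lemma wp_block:
  fixes p q c :: nat assumes "prime p" "odd q" "p dvd q"
  shows "[wp p (c * q) = (wp p q) ^ c] (mod q^2)"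
proof (induction c)
  case 0
  then show ?case by (simp add: wp_def)
next
  case (Suc c)
  have p1: "p > 1" using assms(1) prime_gt_1_nat by simp
  define K where "K = {k\<in>{1..q}. \<not> p dvd k}"
  have S: "{k\<in>{1..Suc c * q}. \<not> p dvd k} = {k\<in>{1..c*q}. \<not> p dvd k} \<union> (\<lambda>k. c * q + k) ` K"
  proof (intro equalityI subsetI)
    fix k assume k: "k \<in> {k\<in>{1..Suc c * q}. \<not> p dvd k}"
    show "k \<in> {k\<in>{1..c*q}. \<not> p dvd k} \<union> (\<lambda>k. c * q + k) ` K"
    proof (cases "k \<le> c * q")
      case False
      define j where "j = k - c * q"
      have j: "k = c * q + j" "j \<ge> 1" using False by (auto simp: j_def)
      have pcq: "p dvd c * q" using assms(3) by simp
      have "\<not> p dvd j" using k j pcq by (simp add: dvd_add_right_iff)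
      moreover have "j \<le> q" using k j by simp
      ultimately have "j \<in> K" using j by (auto simp: K_def)
      then show ?thesis using j by blast
    qed (use k in auto)
  next
    fix k assume "k \<in> {k\<in>{1..c*q}. \<not> p dvd k} \<union> (\<lambda>k. c * q + k) ` K"
    then show "k \<in> {k\<in>{1..Suc c * q}. \<not> p dvd k}"
    proof
      assume "k \<in> (\<lambda>k. c * q + k) ` K"
      then obtain j where j: "k = c * q + j" "j \<in> K" by auto
      have pcq: "p dvd c * q" using assms(3) by simp
      have "\<not> p dvd k" using j pcq unfolding K_def by (simp add: dvd_add_right_iff)
      then show ?thesis using j by (auto simp: K_def)
    qed auto
  qed
  have disj: "{k\<in>{1..c*q}. \<not> p dvd k} \<inter> (\<lambda>k. c * q + k) ` K = {}" by (auto simp: K_def)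
  have inj: "inj_on (\<lambda>k. c * q + k) K" by (auto simp: inj_on_def)
  have "wp p (Suc c * q) = wp p (c * q) * (\<Prod>k\<in>(\<lambda>k. c * q + k) ` K. k)"
    unfolding wp_def by (subst S, rule prod.union_disjoint) (use disj in \<open>auto simp: K_def\<close>)
  also have "(\<Prod>k\<in>(\<lambda>k. c * q + k) ` K. k) = (\<Prod>k\<in>K. c * q + k)"
    by (subst prod.reindex[OF inj]) simp
  finally have eq: "wp p (Suc c * q) = wp p (c * q) * (\<Prod>k\<in>K. c * q + k)" .
  have "[(\<Prod>k\<in>K. c * q + k) = (\<Prod>k\<in>K. k)] (mod q^2)"
    unfolding K_def by (rule pair_cong[OF assms(2) assms(3) p1]) simp
  hence "[(\<Prod>k\<in>K. c * q + k) = wp p q] (mod q^2)" by (simp add: wp_def K_def)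
  hence "[wp p (c * q) * (\<Prod>k\<in>K. c * q + k) = wp p q ^ c * wp p q] (mod q^2)"
    using Suc.IH by (rule cong_mult[rotated])
  then show ?case using eq by (simp add: mult.commute)
qed


lemma abs_id:
  fixes pa pb A B wa wb N wN A2 w2a B2 w2b C1 C2 C3 D1 D2 D3 :: nat
  assumes "A*B*D1 = N" "A*A*D2 = A2" "B*B*D3 = B2"
    "(pa*A*wa)*(pb*B*wb)*C1 = pa*pb*N*wN"
    "(pa*A*wa)*(pa*A*wa)*C2 = pa*pa*A2*w2a"
    "(pb*B*wb)*(pb*B*wb)*C3 = pb*pb*B2*w2b"
    "pa*A*wa*pb*B*wb \<noteq> 0"
  shows "C1*C2*C3*(wa^3*wb^3) = D1*D2*D3*(wN*w2a*w2b)"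
proof -
  have "(C1*C2*C3*(wa^3*wb^3)) * (pa*A*pb*B)^3 = ((pa*A*wa)*(pb*B*wb)*C1) * ((pa*A*wa)*(pa*A*wa)*C2) * ((pb*B*wb)*(pb*B*wb)*C3)"
    by (simp add: power3_eq_cube ac_simps)
  also have "\<dots> = (pa*pb*(A*B*D1)*wN) * (pa*pa*(A*A*D2)*w2a) * (pb*pb*(B*B*D3)*w2b)"
    by (simp only: assms(1-6))
  also have "\<dots> = (D1*D2*D3*(wN*w2a*w2b)) * (pa*A*pb*B)^3"
    by (simp add: power3_eq_cube ac_simps)
  finally show ?thesis using assms(7) by simp
qed


lemma identity:
  fixes p a b :: nat assumes "prime p"
  shows "((a + b) * p choose (a * p)) * (2 * (a * p) choose (a * p)) * (2 * (b * p) choose (b * p))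
          * (wp p (a * p) ^ 3 * wp p (b * p) ^ 3)
       = ((a + b) choose a) * (2 * a choose a) * (2 * b choose b)
          * (wp p ((a + b) * p) * wp p (2 * a * p) * wp p (2 * b * p))"
proof -
  have p0: "p > 0" using assms prime_gt_0_nat by simp
  have fs: "\<And>x. fact (x * p) = p ^ x * fact x * wp p (x * p)"
    by (subst fact_split[OF assms]) (simp add: p0)
  define C1 where "C1 = ((a + b) * p choose (a * p))"
  define C2 where "C2 = (2 * (a * p) choose (a * p))"
  define C3 where "C3 = (2 * (b * p) choose (b * p))"
  define D1 where "D1 = ((a + b) choose a)"
  define D2 where "D2 = (2 * a choose a)"
  define D3 where "D3 = (2 * b choose b)"
  have e1: "fact (a * p) * fact (b * p) * C1 = (fact ((a + b) * p) :: nat)"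
    using binomial_fact_lemma[of "a * p" "(a + b) * p"] unfolding C1_def
    by (simp add: add_mult_distrib)
  have e2: "fact (a * p) * fact (a * p) * C2 = (fact (2 * a * p) :: nat)"
    using binomial_fact_lemma[of "a * p" "2 * (a * p)"] unfolding C2_def by (simp add: mult.assoc)
  have e3: "fact (b * p) * fact (b * p) * C3 = (fact (2 * b * p) :: nat)"
    using binomial_fact_lemma[of "b * p" "2 * (b * p)"] unfolding C3_def by (simp add: mult.assoc)
  have q1: "fact a * fact b * D1 = (fact (a + b) :: nat)"
    using binomial_fact_lemma[of a "a + b"] unfolding D1_def by simp
  have q2: "fact a * fact a * D2 = (fact (2 * a) :: nat)"
    using binomial_fact_lemma[of a "2 * a"] unfolding D2_def by simp
  have q3: "fact b * fact b * D3 = (fact (2 * b) :: nat)"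
    using binomial_fact_lemma[of b "2 * b"] unfolding D3_def by simp
  have pw: "p ^ (a + b) = p ^ a * p ^ b" "p ^ (2 * a) = p ^ a * p ^ a" "p ^ (2 * b) = p ^ b * p ^ b"
    by (simp_all add: power_add mult_2)
  have h4: "(p ^ a * fact a * wp p (a * p)) * (p ^ b * fact b * wp p (b * p)) * C1
      = p ^ a * p ^ b * fact (a + b) * wp p ((a + b) * p)"
    using e1 unfolding fs pw .
  have h5: "(p ^ a * fact a * wp p (a * p)) * (p ^ a * fact a * wp p (a * p)) * C2
      = p ^ a * p ^ a * fact (2 * a) * wp p (2 * a * p)"
    using e2 unfolding fs pw .
  have h6: "(p ^ b * fact b * wp p (b * p)) * (p ^ b * fact b * wp p (b * p)) * C3
      = p ^ b * p ^ b * fact (2 * b) * wp p (2 * b * p)"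
    using e3 unfolding fs pw .
  have nz: "p ^ a * fact a * wp p (a * p) * p ^ b * fact b * wp p (b * p) \<noteq> (0::nat)"
    using p0 by (simp add: wp_def)
  have "C1 * C2 * C3 * (wp p (a * p) ^ 3 * wp p (b * p) ^ 3)
      = D1 * D2 * D3 * (wp p ((a + b) * p) * wp p (2 * a * p) * wp p (2 * b * p))"
    by (rule abs_id[OF q1 q2 q3 h4 h5 h6 nz])
  then show ?thesis unfolding C1_def C2_def C3_def D1_def D2_def D3_def .
qed

lemma wcong:
  fixes p a b t :: nat assumes "prime p" "odd p" "p ^ t dvd a" "p ^ t dvd b"
  shows "[wp p (a * p) ^ 3 * wp p (b * p) ^ 3
          = wp p ((a + b) * p) * wp p (2 * a * p) * wp p (2 * b * p)] (mod p ^ (2 * t + 2))"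
proof -
  define q where "q = p ^ (t + 1)"
  have oq: "odd q" using assms(2) by (simp add: q_def)
  have pq: "p dvd q" by (simp add: q_def)
  have tt: "2 * t + 2 = (t + 1) * 2" by simp
  have q2: "q ^ 2 = p ^ (2 * t + 2)" by (simp only: q_def tt power_mult)
  obtain a' where a': "a = p ^ t * a'" using assms(3) by auto
  obtain b' where b': "b = p ^ t * b'" using assms(4) by auto
  define C where "C = wp p q"
  have B: "\<And>c. [wp p (c * q) = C ^ c] (mod q ^ 2)"
    unfolding C_def by (rule wp_block[OF assms(1) oq pq])
  have ha: "a * p = a' * q" "b * p = b' * q" "(a + b) * p = (a' + b') * q"
    "2 * a * p = (2 * a') * q" "2 * b * p = (2 * b') * q"
    unfolding a' b' q_def by (simp_all add: algebra_simps)
  have c1: "[wp p (a * p) ^ 3 * wp p (b * p) ^ 3 = (C ^ a') ^ 3 * (C ^ b') ^ 3] (mod q ^ 2)"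
    unfolding ha by (intro cong_mult cong_pow B)
  have c2: "[wp p ((a + b) * p) * wp p (2 * a * p) * wp p (2 * b * p)
       = C ^ (a' + b') * C ^ (2 * a') * C ^ (2 * b')] (mod q ^ 2)"
    unfolding ha by (intro cong_mult B)
  have e3: "(C ^ a') ^ 3 * (C ^ b') ^ 3 = C ^ (a' + b') * C ^ (2 * a') * C ^ (2 * b')"
  proof -
    have e: "a' * 3 + b' * 3 = (a' + b') + 2 * a' + 2 * b'" by simp
    show ?thesis by (simp only: power_mult[symmetric] power_add[symmetric] e)
  qed
  have "[wp p (a * p) ^ 3 * wp p (b * p) ^ 3
          = wp p ((a + b) * p) * wp p (2 * a * p) * wp p (2 * b * p)] (mod q ^ 2)"
    using cong_trans[OF c1[unfolded e3] cong_sym[OF c2]] .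
  thus ?thesis by (simp only: q2)
qed



lemma binom_div:
  fixes p a b r t :: nat
  assumes "prime p" "p ^ (r - 1) dvd (a + b)" "a > 0" "p ^ t dvd a" "\<not> p ^ (t + 1) dvd a" "t \<le> r - 1"
  shows "p ^ (r - 1 - t) dvd ((a + b) choose a)"
proof -
  have "Suc (a - 1) * ((a + b) choose Suc (a - 1)) = (a + b) * ((a + b - 1) choose (a - 1))"
    by (rule binomial_absorption)
  hence eq: "a * ((a + b) choose a) = (a + b) * ((a + b - 1) choose (a - 1))"
    using assms(3) by simp
  have d1: "p ^ (r - 1) dvd a * ((a + b) choose a)" unfolding eq using assms(2) by simp
  obtain a' where a': "a = p ^ t * a'" using assms(4) by auto
  have npa: "\<not> p dvd a'"
  proof
    assume "p dvd a'"
    then obtain k where "a' = p * k" by auto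
    hence "a = p ^ (t + 1) * k" using a' by simp
    thus False using assms(5) by simp
  qed
  have rr: "r - 1 = t + (r - 1 - t)" using assms(6) by simp
  have pp: "p ^ (r - 1) = p ^ t * p ^ (r - 1 - t)" by (subst rr) (simp only: power_add)
  have "p ^ t * p ^ (r - 1 - t) dvd p ^ t * (a' * ((a + b) choose a))"
    using d1 unfolding pp a' by (simp add: mult.assoc)
  hence d2: "p ^ (r - 1 - t) dvd a' * ((a + b) choose a)"
    using assms(1) prime_gt_0_nat by (simp add: nat_mult_dvd_cancel1)
  have "coprime p a'" using npa assms(1) by (simp add: prime_imp_coprime)
  hence "coprime (p ^ (r - 1 - t)) a'" by simp
  thus ?thesis using d2 by (simp add: coprime_dvd_mult_right_iff)
qed

lemma central_div:
  fixes p a b r t :: nat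
  assumes "prime p" "p ^ (r - 1) dvd (a + b)" "\<not> p ^ (t + 1) dvd a" "t \<le> r - 1"
  shows "p ^ (r - 1 - t) dvd ((2 * a choose a) * (2 * b choose b))"
proof -
  have pe: "prime_elem p" using assms(1) by simp
  have p0: "p > 0" using assms(1) prime_gt_0_nat by simp
  define K where "K = 2 * (a + b) + r"
  define da where "da = (\<lambda>j. 2 * (a mod p ^ j) div p ^ j)"
  define db where "db = (\<lambda>j. 2 * (b mod p ^ j) div p ^ j)"
  have "multiplicity p ((2 * a choose a) * (2 * b choose b))
        = multiplicity p (2 * a choose a) + multiplicity p (2 * b choose b)"
    by (rule prime_elem_multiplicity_mult_distrib[OF pe]) auto
  also have "\<dots> = (\<Sum>j\<in>{1..K}. da j) + (\<Sum>j\<in>{1..K}. db j)"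
    unfolding da_def db_def
    using mult_central[OF assms(1), of a K] mult_central[OF assms(1), of b K] by (simp add: K_def)
  also have "\<dots> = (\<Sum>j\<in>{1..K}. da j + db j)" by (simp add: sum.distrib)
  finally have m: "multiplicity p ((2 * a choose a) * (2 * b choose b)) = (\<Sum>j\<in>{1..K}. da j + db j)" .
  have "(\<Sum>j\<in>{t+1..r-1}. (1::nat)) \<le> (\<Sum>j\<in>{t+1..r-1}. da j + db j)"
  proof (rule sum_mono)
    fix j assume j: "j \<in> {t+1..r-1}"
    have pj: "p ^ j > 0" using p0 by simp
    have "p ^ j dvd p ^ (r - 1)" using j by (simp add: le_imp_power_dvd)
    hence dab: "p ^ j dvd a + b" using assms(2) dvd_trans by blast
    have "\<not> p ^ j dvd a"
    proof
      assume "p ^ j dvd a"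
      moreover have "t + 1 \<le> j" using j by simp
      hence "p ^ (t + 1) dvd p ^ j" by (rule le_imp_power_dvd)
      ultimately show False using assms(3) dvd_trans by blast
    qed
    hence x0: "a mod p ^ j > 0" by (simp add: dvd_eq_mod_eq_0)
    have "(a mod p ^ j + b mod p ^ j) mod p ^ j = 0"
      using dab by (simp add: mod_add_eq dvd_eq_mod_eq_0)
    moreover have "a mod p ^ j < p ^ j" "b mod p ^ j < p ^ j" using pj by simp_all
    ultimately have s: "a mod p ^ j + b mod p ^ j = p ^ j"
    proof -
      assume h: "(a mod p ^ j + b mod p ^ j) mod p ^ j = 0" "a mod p ^ j < p ^ j" "b mod p ^ j < p ^ j"
      then obtain k where k: "a mod p ^ j + b mod p ^ j = p ^ j * k" by (auto simp: dvd_eq_mod_eq_0[symmetric])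
      have "p ^ j * k < p ^ j * 2" using h(2,3) k by linarith
      hence "k < 2" using pj by simp
      moreover have "k \<noteq> 0"
      proof
        assume "k = 0"
        hence "a mod p ^ j + b mod p ^ j = 0" using k by simp
        thus False using x0 by simp
      qed
      ultimately have "k = 1" by simp
      thus ?thesis using k by simp
    qed
    show "1 \<le> da j + db j"
    proof (cases "2 * (a mod p ^ j) \<ge> p ^ j")
      case True
      hence "0 < da j" unfolding da_def using pj by (simp only: div_greater_zero_iff)
      hence "1 \<le> da j" by simp
      thus ?thesis by simp
    next
      case False
      hence "2 * (b mod p ^ j) \<ge> p ^ j" using s by linarith
      hence "0 < db j" unfolding db_def using pj by (simp only: div_greater_zero_iff)
      hence "1 \<le> db j" by simp
      thus ?thesis by simp
    qed
  qed
  also have "\<dots> \<le> (\<Sum>j\<in>{1..K}. da j + db j)"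
    by (rule sum_mono2) (auto simp: K_def)
  finally have "r - 1 - t \<le> multiplicity p ((2 * a choose a) * (2 * b choose b))"
    using m by simp
  thus ?thesis by (rule multiplicity_dvd')
qed



lemma core:
  fixes p a b r :: nat
  assumes "prime p" "odd p" "r \<ge> 1" "p ^ (r - 1) dvd (a + b)"
  shows "[((a + b) * p choose (a * p)) * (2 * (a * p) choose (a * p)) * (2 * (b * p) choose (b * p))
          = ((a + b) choose a) * (2 * a choose a) * (2 * b choose b)] (mod p ^ (2 * r))"
proof -
  have nu: "\<not> is_unit p" using assms(1) by auto
  obtain t where t: "t \<le> r - 1" "p ^ t dvd a" "t < r - 1 \<Longrightarrow> a > 0 \<and> \<not> p ^ (t + 1) dvd a"
  proof (cases "a = 0 \<or> r - 1 \<le> multiplicity p a")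
    case True
    have "p ^ (r - 1) dvd a"
    proof (cases "a = 0")
      case False
      then show ?thesis using True by (simp add: multiplicity_dvd')
    qed simp
    then show ?thesis using that[of "r - 1"] by simp
  next
    case False
    hence a0: "a \<noteq> 0" and lt: "multiplicity p a < r - 1" by auto
    have "\<not> p ^ (multiplicity p a + 1) dvd a"
      using power_dvd_iff_le_multiplicity[OF a0 nu, of "multiplicity p a + 1"] by simp
    then show ?thesis using that[of "multiplicity p a"] lt a0 multiplicity_dvd[of p a] by simp
  qed
  have "p ^ t dvd p ^ (r - 1)" using t(1) by (rule le_imp_power_dvd)
  hence "p ^ t dvd a + b" using assms(4) dvd_trans by blast
  hence tb: "p ^ t dvd b" using t(2) by (simp add: dvd_add_right_iff)
  define P where "P = ((a + b) * p choose (a * p)) * (2 * (a * p) choose (a * p)) * (2 * (b * p) choose (b * p))"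
  define Q where "Q = ((a + b) choose a) * (2 * a choose a) * (2 * b choose b)"
  define W1 where "W1 = wp p (a * p) ^ 3 * wp p (b * p) ^ 3"
  define W2 where "W2 = wp p ((a + b) * p) * wp p (2 * a * p) * wp p (2 * b * p)"
  have id: "P * W1 = Q * W2" unfolding P_def Q_def W1_def W2_def by (rule identity[OF assms(1)])
  have wc: "[W1 = W2] (mod p ^ (2 * t + 2))" unfolding W1_def W2_def
    by (rule wcong[OF assms(1) assms(2) t(2) tb])
  define e where "e = r - 1 - t"
  have dq: "p ^ (2 * e) dvd Q"
  proof (cases "t < r - 1")
    case False
    hence "e = 0" using t(1) by (simp add: e_def)
    then show ?thesis by simp
  next
    case True
    have d1: "p ^ e dvd ((a + b) choose a)" unfolding e_def
      using binom_div[OF assms(1) assms(4) _ t(2) _ t(1)] t(3)[OF True] by simp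
    have d2: "p ^ e dvd ((2 * a choose a) * (2 * b choose b))" unfolding e_def
      using central_div[OF assms(1) assms(4) _ t(1)] t(3)[OF True] by simp
    have "p ^ e * p ^ e dvd ((a + b) choose a) * ((2 * a choose a) * (2 * b choose b))"
      using d1 d2 by (rule mult_dvd_mono)
    then show ?thesis unfolding Q_def by (simp add: mult_2 power_add mult.assoc)
  qed
  then obtain z where z: "Q = p ^ (2 * e) * z" by blast
  have ee: "p ^ (2 * r) = p ^ (2 * e) * p ^ (2 * t + 2)"
  proof -
    have "2 * r = 2 * e + (2 * t + 2)" using t(1) assms(3) by (simp add: e_def)
    thus ?thesis by (simp only: power_add)
  qed
  have "[z * W2 = z * W1] (mod p ^ (2 * t + 2))" by (rule cong_scalar_left[OF cong_sym[OF wc]])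
  hence "(z * W2) mod p ^ (2 * t + 2) = (z * W1) mod p ^ (2 * t + 2)" unfolding cong_def .
  hence "(p ^ (2 * e) * (z * W2)) mod p ^ (2 * r) = (p ^ (2 * e) * (z * W1)) mod p ^ (2 * r)"
    unfolding ee mod_mult_mult1 by (rule arg_cong[where f="\<lambda>x. p ^ (2 * e) * x"])
  hence c0: "[Q * W2 = Q * W1] (mod p ^ (2 * r))" unfolding cong_def z mult.assoc .
  have c: "[P * W1 = Q * W1] (mod p ^ (2 * r))" using c0 unfolding id[symmetric] .
  have "coprime W1 p" unfolding W1_def using wp_coprime[OF assms(1)] by simp
  hence cop: "coprime W1 (p ^ (2 * r))" by simp
  have "[P = Q] (mod p ^ (2 * r))" using cong_mult_rcancel_nat[OF cop, of P Q] c by blast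
  thus ?thesis unfolding P_def Q_def .
qed

theorem lemma2p14:
  fixes p r m s :: nat
  assumes "prime p" and "odd p" and "r \<ge> 1" and "m \<ge> 1"
    and "s < m * p ^ (r - 1)"
  shows "[(m * p ^ r choose (s * p)) * (2 * s * p choose (s * p))
            * (2 * m * p ^ r - 2 * s * p choose (m * p ^ r - s * p))
          = (m * p ^ (r - 1) choose s) * (2 * s choose s)
            * (2 * m * p ^ (r - 1) - 2 * s choose (m * p ^ (r - 1) - s))] (mod p ^ (2 * r))"
proof -
  define b where "b = m * p ^ (r - 1) - s"
  have e6: "m * p ^ (r - 1) = s + b" using assms(5) by (simp add: b_def)
  have pr: "p ^ r = p ^ (r - 1) * p" using assms(3)
    by (metis Suc_diff_le diff_Suc_1 mult.commute power_Suc)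
  have e1: "m * p ^ r = (s + b) * p" unfolding pr e6[symmetric] by (simp add: mult.assoc)
  have e3: "2 * s * p = 2 * (s * p)" by simp
  have e1': "m * p ^ r = s * p + b * p" using e1 by (simp only: add_mult_distrib)
  have e4: "2 * m * p ^ r - 2 * s * p = 2 * (b * p)" using e1' by (simp add: mult.assoc add_mult_distrib2)
  have e5: "m * p ^ r - s * p = b * p" using e1' by linarith
  have e7: "2 * m * p ^ (r - 1) - 2 * s = 2 * b" using e6 by (simp add: mult.assoc add_mult_distrib2)
  have e8: "m * p ^ (r - 1) - s = b" using e6 by simp
  have dv: "p ^ (r - 1) dvd (s + b)" unfolding e6[symmetric] by simp
  show ?thesis unfolding e4 unfolding e5 unfolding e7 unfolding e8 unfolding e3 unfolding e1 unfolding e6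
    by (rule core[OF assms(1-3) dv])
qed

end
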